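(* Let $K, L$ be compact convex subsets of $\mathbb{R}^2$ such that for every unit vector $u \in \mathbb{R}^2$ the projection $L_u$ (onto the line $u^\perp$) contains a translate of $K_u$. Then $V_2(K) \le \tfrac{3}{2} V_2(L)$. Moreover, equality holds when $L$ is a triangle and $K = \tfrac12(L + (-L))$, and such a pair satisfies the projection hypothesis.
   Context: For a set $S$ and unit vector $u$, $S_u$ denotes the orthogonal projection of $S$ onto $u^\perp$. "$A$ contains a translate of $B$" means $B+w\subseteq A$ for some $w$. $L + (-L) = \{x - y : x, y \in L\}$. $V_2$ is area. *)

theory Defs
  imports "HOL-Analysis.Analysis"
begin

definition proj_perp :: "real^2 \<Rightarrow> (real^2) set \<Rightarrow> (real^2) set" where
  "proj_perp u S = (\<lambda>x. x - (x \<bullet> u) *\<^sub>R u) ` S"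

definition contains_translate :: "(real^2) set \<Rightarrow> (real^2) set \<Rightarrow> bool" where
  "contains_translate A B \<longleftrightarrow> (\<exists>w. (\<lambda>x. x + w) ` B \<subseteq> A)"

definition proj_hyp :: "(real^2) set \<Rightarrow> (real^2) set \<Rightarrow> bool" where
  "proj_hyp K L \<longleftrightarrow> (\<forall>u. norm u = 1 \<longrightarrow> contains_translate (proj_perp u L) (proj_perp u K))"

end

theory Submission imports Defs begin
definition phi :: "real \<Rightarrow> real \<Rightarrow> real^2" where
  "phi a s = a *\<^sub>R axis 1 1 + s *\<^sub>R axis 2 1"

lemma phi_comp[simp]: "phi a s $ 1 = a" "phi a s $ 2 = s"
  by (auto simp: phi_def axis_def)

lemma phi_meas[measurable]: "(\<lambda>p. phi (fst p) (snd p)) \<in> borel_measurable borel"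
  unfolding phi_def by (intro borel_measurable_continuous_onI continuous_intros)

lemma phi_surj: "phi (z$1) (z$2) = z"
  by (simp add: vec_eq_iff forall_2)

lemma UNIV_2': "(UNIV::2 set) = {1,2}"
  using exhaust_2 by auto

lemma prod_Basis_2: "(\<Prod>b\<in>(Basis::(real^2) set). f b) = f (axis 1 1) * f (axis 2 1)"
proof -
  have B: "(Basis::(real^2) set) = {axis 1 1, axis 2 1}"
    by (auto simp: Basis_vec_def UNIV_2')
  have "axis (1::2) (1::real) \<noteq> axis 2 1" by (simp add: axis_eq_axis)
  then show ?thesis unfolding B by (subst prod.insert) auto
qed

lemma distr_phi: "distr (lborel \<Otimes>\<^sub>M lborel) borel (\<lambda>p. phi (fst p) (snd p)) = (lborel :: (real^2) measure)"
proof (rule lborel_eqI[symmetric])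
  fix l u :: "real^2"
  assume le: "\<And>b. b \<in> Basis \<Longrightarrow> l \<bullet> b \<le> u \<bullet> b"
  have l1: "l$1 \<le> u$1" using le[of "axis 1 1"] by (auto simp: Basis_vec_def inner_axis)
  have l2: "l$2 \<le> u$2" using le[of "axis 2 1"] by (auto simp: Basis_vec_def inner_axis)
  have "(\<lambda>p. phi (fst p) (snd p)) -` box l u \<inter> space (lborel \<Otimes>\<^sub>M lborel) = {l$1<..<u$1} \<times> {l$2<..<u$2}"
    by (auto simp: box_def Basis_vec_def inner_axis space_pair_measure UNIV_2')
  then show "emeasure (distr (lborel \<Otimes>\<^sub>M lborel) borel (\<lambda>p. phi (fst p) (snd p))) (box l u) = (\<Prod>b\<in>Basis. (u - l) \<bullet> b)"
    using l1 l2
  proof -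
    have m: "(\<lambda>p. phi (fst p) (snd p)) \<in> (lborel \<Otimes>\<^sub>M lborel) \<rightarrow>\<^sub>M borel"
      by (simp add: lborel_prod)
    have "emeasure (distr (lborel \<Otimes>\<^sub>M lborel) borel (\<lambda>p. phi (fst p) (snd p))) (box l u)
        = emeasure (lborel \<Otimes>\<^sub>M lborel) ({l$1<..<u$1} \<times> {l$2<..<u$2})"
      by (subst emeasure_distr[OF m]) (simp_all add: \<open>_ = {l$1<..<u$1} \<times> {l$2<..<u$2}\<close>)
    also have "\<dots> = (\<Prod>b\<in>Basis. (u - l) \<bullet> b)"
      using l1 l2 by (simp add: lborel.emeasure_pair_measure_Times prod_Basis_2 inner_axis ennreal_mult)
    finally show ?thesis .
  qed
qed simp

lemma nn_integral_phi:
  assumes [measurable]: "h \<in> borel_measurable (borel :: (real^2) measure)"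
  shows "(\<integral>\<^sup>+z. h z \<partial>lborel) = (\<integral>\<^sup>+a. \<integral>\<^sup>+s. h (phi a s) \<partial>lborel \<partial>lborel)"
proof -
  have "(\<integral>\<^sup>+z. h z \<partial>lborel) = (\<integral>\<^sup>+z. h z \<partial>distr (lborel \<Otimes>\<^sub>M lborel) borel (\<lambda>p. phi (fst p) (snd p)))"
    by (simp add: distr_phi)
  also have "\<dots> = (\<integral>\<^sup>+p. h (phi (fst p) (snd p)) \<partial>(lborel \<Otimes>\<^sub>M lborel))"
    by (subst nn_integral_distr) (simp_all add: lborel_prod)
  also have "\<dots> = (\<integral>\<^sup>+a. \<integral>\<^sup>+s. h (phi a s) \<partial>lborel \<partial>lborel)"
    by (subst lborel.nn_integral_fst[symmetric]) (simp_all add: lborel_prod measurable_compose[OF phi_meas assms])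
  finally show ?thesis .
qed

lemma layer_cake:
  fixes f :: "real \<Rightarrow> ennreal"
  assumes [measurable]: "f \<in> borel_measurable borel" and fin: "\<And>x. f x < \<infinity>"
  shows "(\<integral>\<^sup>+x. f x \<partial>lborel) = (\<integral>\<^sup>+r. indicator {0..} r * emeasure lborel {x. ennreal r < f x} \<partial>lborel)"
proof -
  have inner: "(\<integral>\<^sup>+r. (if 0 \<le> r \<and> ennreal r < f x then 1 else 0) \<partial>lborel) = f x" for x
  proof -
    obtain c where c: "f x = ennreal c" "0 \<le> c" using fin[of x]
      by (cases "f x" rule: ennreal_cases) auto
    have "(\<lambda>r. (if 0 \<le> r \<and> ennreal r < f x then 1 else 0) :: ennreal) = indicator {0..<c}"
      using c by (auto simp: fun_eq_iff ennreal_less_iff split: split_indicator)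
    then show ?thesis using c by simp
  qed
  have "(\<integral>\<^sup>+x. f x \<partial>lborel) = (\<integral>\<^sup>+x. \<integral>\<^sup>+r. (if 0 \<le> r \<and> ennreal r < f x then 1 else 0) \<partial>lborel \<partial>lborel)"
    by (simp add: inner)
  also have "\<dots> = (\<integral>\<^sup>+r. \<integral>\<^sup>+x. (if 0 \<le> r \<and> ennreal r < f x then 1 else 0) \<partial>lborel \<partial>lborel)"
    by (rule lborel_pair.Fubini'[symmetric]) measurable
  also have "\<dots> = (\<integral>\<^sup>+r. indicator {0..} r * emeasure lborel {x. ennreal r < f x} \<partial>lborel)"
  proof (rule nn_integral_cong)
    fix r :: real
    have "(\<lambda>x. (if 0 \<le> r \<and> ennreal r < f x then 1 else 0) :: ennreal) = (\<lambda>x. indicator {0..} r * indicator {x. ennreal r < f x} x)"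
      by (auto simp: fun_eq_iff split: split_indicator)
    moreover have "{x. ennreal r < f x} \<in> sets lborel" by measurable
    ultimately show "(\<integral>\<^sup>+x. (if 0 \<le> r \<and> ennreal r < f x then 1 else 0) \<partial>lborel) = indicator {0..} r * emeasure lborel {x. ennreal r < f x}"
      by (simp add: nn_integral_cmult)
  qed
  finally show ?thesis .
qed

lemma oneD:
  fixes S T :: "real set"
  assumes S: "S \<in> lmeasurable" and T: "T \<in> lmeasurable" and bS: "bounded S"
    and ST: "\<And>a b. a \<in> S \<Longrightarrow> b \<in> S \<Longrightarrow> a - b \<in> T"
  shows "2 * measure lebesgue S \<le> measure lebesgue T"
proof (cases "S = {}")
  case True then show ?thesis by simp
next
  case ne: False
  show ?thesis
  proof (rule field_le_epsilon)
    fix e0 :: real assume e0: "0 < e0"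
    define e where "e = e0 / 2"
    have e: "0 < e" using e0 by (simp add: e_def)
    have bda: "bdd_above S" and bdb: "bdd_below S" using bS
      by (auto simp: bounded_imp_bdd_above bounded_imp_bdd_below)
    obtain a where a: "a \<in> S" "Sup S - e < a" using less_cSupD[OF ne, of "Sup S - e"] e by auto
    obtain b where b: "b \<in> S" "b < Inf S + e" using cInf_lessD[OF ne, of "Inf S + e"] e by auto
    define X where "X = (\<lambda>x. x - a) ` S"
    define Y where "Y = (\<lambda>x. x - b) ` S"
    have X: "X \<in> lmeasurable" "measure lebesgue X = measure lebesgue S"
      unfolding X_def using S by (auto intro: measurable_translation_subtract measure_translation_subtract)
    have Y: "Y \<in> lmeasurable" "measure lebesgue Y = measure lebesgue S"
      unfolding Y_def using S by (auto intro: measurable_translation_subtract measure_translation_subtract)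
    have XY: "X \<union> Y \<subseteq> T" unfolding X_def Y_def using ST a b by auto
    have "X \<inter> Y \<subseteq> {-e..e}"
    proof
      fix z assume "z \<in> X \<inter> Y"
      then obtain x y where "x \<in> S" "y \<in> S" "z = x - a" "z = y - b" unfolding X_def Y_def by auto
      moreover have "x \<le> Sup S" using \<open>x \<in> S\<close> bda by (simp add: cSup_upper)
      moreover have "Inf S \<le> y" using \<open>y \<in> S\<close> bdb by (simp add: cInf_lower)
      ultimately show "z \<in> {-e..e}" using a b by auto
    qed
    then have "measure lebesgue (X \<inter> Y) \<le> measure lebesgue {-e..e}"
      using X(1) Y(1) by (intro measure_mono_fmeasurable) (auto intro: sets.Int)
    also have "\<dots> = 2 * e" using e by simp
    finally have I: "measure lebesgue (X \<inter> Y) \<le> 2 * e" .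
    have "measure lebesgue (X \<union> Y) \<le> measure lebesgue T"
      using XY X Y T by (intro measure_mono_fmeasurable) (auto intro: fmeasurable.Un)
    moreover have "measure lebesgue (X \<union> Y) = measure lebesgue X + measure lebesgue Y - measure lebesgue (X \<inter> Y)"
      using X Y by (intro measure_Un3) auto
    ultimately show "2 * measure lebesgue S \<le> measure lebesgue T + e0"
      using X Y I by (simp add: e_def)
  qed
qed

definition slice :: "(real^2) set \<Rightarrow> real \<Rightarrow> real set" where
  "slice K a = {s. phi a s \<in> K}"

definition dif :: "(real^2) set \<Rightarrow> (real^2) set" where
  "dif K = {x - y | x y. x \<in> K \<and> y \<in> K}"

lemma phi_cont: "continuous_on UNIV (phi a)"
  unfolding phi_def by (intro continuous_intros)

lemma phi_norm: "\<bar>s\<bar> \<le> norm (phi a s)" "\<bar>a\<bar> \<le> norm (phi a s)"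
  using component_le_norm_cart[of "phi a s" 2] component_le_norm_cart[of "phi a s" 1] by auto

lemma slice_compact: "compact K \<Longrightarrow> compact (slice K a)"
proof -
  assume K: "compact K"
  have "closed (slice K a)" unfolding slice_def
    using continuous_on_closed_vimage[OF closed_UNIV, of "phi a"] phi_cont compact_imp_closed[OF K] by (simp add: vimage_def)
  moreover obtain B where "\<forall>x\<in>K. norm x \<le> B" using K compact_imp_bounded bounded_iff by metis
  then have "bounded (slice K a)" unfolding slice_def bounded_iff
    using phi_norm(1) by (metis mem_Collect_eq order_trans real_norm_def)
  ultimately show ?thesis by (simp add: compact_eq_bounded_closed)
qed

lemma phi_comb: "phi a ((1 - u) * s + u * t) = (1 - u) *\<^sub>R phi a s + u *\<^sub>R phi a t"
  by (simp add: vec_eq_iff forall_2 algebra_simps)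

lemma slice_convex: "convex K \<Longrightarrow> convex (slice K a)"
  unfolding convex_alt slice_def by (auto simp: phi_comb)

lemma slice_interval:
  assumes "compact K" "convex K" "slice K a \<noteq> {}"
  obtains p q where "p \<le> q" "slice K a = {p..q}"
proof -
  have "connected (slice K a) \<and> compact (slice K a)"
    using assms slice_compact slice_convex convex_connected by blast
  then obtain p q where "slice K a = {p..q}" using connected_compact_interval_1 by metis
  moreover then have "p \<le> q" using assms(3) by auto
  ultimately show ?thesis using that by blast
qed

lemma phi_diff: "phi a s - phi b t = phi (a - b) (s - t)"
  by (simp add: vec_eq_iff forall_2)

lemma compact_dif: "compact K \<Longrightarrow> compact (dif K)"
  unfolding dif_def using compact_differences by blast

lemma slice_dif:
  assumes K: "compact K" "convex K" and na: "slice K a \<noteq> {}" and nb: "slice K b \<noteq> {}"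
  shows "emeasure lborel (slice K a) + emeasure lborel (slice K b) \<le> emeasure lborel (slice (dif K) (a - b))"
proof -
  obtain p q where pq: "p \<le> q" "slice K a = {p..q}" using slice_interval[OF K na] by metis
  obtain p' q' where pq': "p' \<le> q'" "slice K b = {p'..q'}" using slice_interval[OF K nb] by metis
  have sub: "{p - q'..q - p'} \<subseteq> slice (dif K) (a - b)"
  proof
    fix s assume s: "s \<in> {p - q'..q - p'}"
    define s1 where "s1 = max p (s + p')"
    have "s1 \<in> {p..q}" "s1 - s \<in> {p'..q'}" using s pq pq' by (auto simp: s1_def)
    then have "phi a s1 \<in> K" "phi b (s1 - s) \<in> K" using pq pq' by (auto simp: slice_def)
    moreover have "phi (a - b) s = phi a s1 - phi b (s1 - s)" by (simp add: phi_diff)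
    ultimately show "s \<in> slice (dif K) (a - b)" unfolding slice_def dif_def by blast
  qed
  have "emeasure lborel (slice K a) + emeasure lborel (slice K b) = ennreal ((q - p) + (q' - p'))"
    using pq pq' by (simp del: ennreal_plus add: ennreal_plus[symmetric])
  also have "\<dots> = emeasure lborel {p - q'..q - p'}" using pq pq' by (simp add: algebra_simps)
  also have "\<dots> \<le> emeasure lborel (slice (dif K) (a - b))"
    using sub by (rule emeasure_mono) (use compact_dif[OF K(1)] slice_compact in \<open>auto intro: borel_compact\<close>)
  finally show ?thesis .
qed

lemma slice_eq:
  assumes "K \<in> sets borel"
  shows "emeasure lborel (slice K a) = (\<integral>\<^sup>+s. indicator K (phi a s) \<partial>lborel)"
proof -
  have "slice K a \<in> sets borel"
    unfolding slice_def using measurable_sets_borel[OF measurable_compose[OF _ phi_meas] assms, of "\<lambda>s. (a, s)"]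
    by (simp add: vimage_def)
  moreover have "(\<lambda>s. indicator K (phi a s) :: ennreal) = indicator (slice K a)"
    by (auto simp: fun_eq_iff slice_def split: split_indicator)
  ultimately show ?thesis by simp
qed

lemma slice_meas[measurable]:
  assumes "K \<in> sets borel"
  shows "(\<lambda>a. emeasure lborel (slice K a)) \<in> borel_measurable borel"
proof -
  have [measurable]: "Measurable.pred (borel \<Otimes>\<^sub>M borel) (\<lambda>x. phi (fst x) (snd x) \<in> K)"
    unfolding borel_prod by (rule pred_sets2[OF assms phi_meas])
  show ?thesis unfolding slice_eq[OF assms]
    by measurable
qed

lemma emeasure_slices:
  assumes [measurable]: "K \<in> sets borel"
  shows "emeasure lborel K = (\<integral>\<^sup>+a. emeasure lborel (slice K a) \<partial>lborel)"
proof -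
  have "emeasure lborel K = (\<integral>\<^sup>+z. indicator K z \<partial>lborel)" by simp
  also have "\<dots> = (\<integral>\<^sup>+a. \<integral>\<^sup>+s. indicator K (phi a s) \<partial>lborel \<partial>lborel)"
    by (rule nn_integral_phi) simp
  also have "\<dots> = (\<integral>\<^sup>+a. emeasure lborel (slice K a) \<partial>lborel)"
    by (simp add: slice_eq)
  finally show ?thesis .
qed

lemma level_meas[measurable]:
  fixes g :: "real \<Rightarrow> ennreal"
  assumes [measurable]: "g \<in> borel_measurable borel"
  shows "(\<lambda>r. emeasure lborel {a. ennreal r < g a}) \<in> borel_measurable borel"
proof -
  have "emeasure lborel {a. ennreal r < g a} = (\<integral>\<^sup>+a. indicator {a. ennreal r < g a} a \<partial>lborel)" for r
  proof -
    have "{a. ennreal r < g a} \<in> sets lborel" by measurable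
    then show ?thesis by simp
  qed
  moreover have "(\<lambda>r. \<integral>\<^sup>+a. indicator {a. ennreal r < g a} a \<partial>lborel) \<in> borel_measurable borel"
    by measurable
  ultimately show ?thesis by simp
qed

lemma bounded_slice_support:
  assumes "bounded K"
  shows "bounded {a. slice K a \<noteq> {}}"
proof -
  obtain B where B: "\<forall>x\<in>K. norm x \<le> B" using assms bounded_iff by metis
  show ?thesis unfolding bounded_iff
  proof (intro exI ballI)
    fix a assume "a \<in> {a. slice K a \<noteq> {}}"
    then obtain s where "phi a s \<in> K" by (auto simp: slice_def)
    then show "norm a \<le> B" using B phi_norm(2)[of a s] by force
  qed
qed

lemma borel_lmeasurable:
  fixes S :: "'a::euclidean_space set"
  assumes "S \<in> sets borel" "bounded S"
  shows "S \<in> lmeasurable" "emeasure lborel S = ennreal (measure lebesgue S)"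
proof -
  have "S \<in> sets lebesgue" using assms by (simp add: sets_completionI_sets)
  then show l: "S \<in> lmeasurable" using assms by (intro bounded_set_imp_lmeasurable)
  have "emeasure lborel S = emeasure lebesgue S" using assms by simp
  also have "\<dots> = ennreal (measure lebesgue S)" using l by (simp add: emeasure_eq_measure2)
  finally show "emeasure lborel S = ennreal (measure lebesgue S)" .
qed

theorem BM:
  assumes K: "compact K" "convex K"
  shows "4 * emeasure lborel K \<le> emeasure lborel (dif K)"
proof -
  define f where "f a = emeasure lborel (slice K a)" for a
  define F where "F t = emeasure lborel (slice (dif K) t)" for t
  have KB[measurable]: "K \<in> sets borel" using K by (simp add: borel_compact)
  have DB[measurable]: "dif K \<in> sets borel" using K compact_dif by (simp add: borel_compact)
  have fm[measurable]: "f \<in> borel_measurable borel" unfolding f_def by measurable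
  have Fm[measurable]: "F \<in> borel_measurable borel" unfolding F_def by measurable
  have f_fin: "f a < \<infinity>" for a
    unfolding f_def using slice_compact[OF K(1)] by (intro emeasure_bounded_finite compact_imp_bounded)
  have F_fin: "F a < \<infinity>" for a
    unfolding F_def using slice_compact[OF compact_dif[OF K(1)]] by (intro emeasure_bounded_finite compact_imp_bounded)
  have key: "2 * emeasure lborel {a. ennreal r < 2 * f a} \<le> emeasure lborel {t. ennreal r < F t}"
    if r: "0 \<le> r" for r
  proof -
    define S where "S = {a. ennreal r < 2 * f a}"
    define T where "T = {t. ennreal r < F t}"
    have SB: "S \<in> sets borel" unfolding S_def by measurable
    have TB: "T \<in> sets borel" unfolding T_def by measurable
    have Ssub: "S \<subseteq> {a. slice K a \<noteq> {}}"
      unfolding S_def f_def by (auto simp: ennreal_less_iff)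
    have Tsub: "T \<subseteq> {a. slice (dif K) a \<noteq> {}}"
      unfolding T_def F_def by auto
    have bS: "bounded S" using bounded_subset[OF bounded_slice_support Ssub] K compact_imp_bounded by blast
    have bT: "bounded T" using bounded_subset[OF bounded_slice_support Tsub] K compact_dif compact_imp_bounded by blast
    have ST: "a - b \<in> T" if "a \<in> S" "b \<in> S" for a b
    proof -
      have "slice K a \<noteq> {}" "slice K b \<noteq> {}" using that Ssub by auto
      then have le: "f a + f b \<le> F (a - b)" unfolding f_def F_def using slice_dif[OF K] by blast
      have "ennreal r < f a + f b"
      proof (cases "f a \<le> f b")
        case True
        then have "2 * f a \<le> f a + f b" by (simp add: mult_2 add_left_mono)
        then show ?thesis using that(1) unfolding S_def by auto
      next
        case False
        then have "2 * f b \<le> f a + f b" by (simp add: mult_2 add_right_mono)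
        then show ?thesis using that(2) unfolding S_def by auto
      qed
      then show ?thesis using le unfolding T_def by auto
    qed
    have "2 * measure lebesgue S \<le> measure lebesgue T"
      using oneD[OF borel_lmeasurable(1)[OF SB bS] borel_lmeasurable(1)[OF TB bT] bS ST] by blast
    then have "ennreal (2 * measure lebesgue S) \<le> ennreal (measure lebesgue T)" by (rule ennreal_leI)
    then show ?thesis
      unfolding S_def[symmetric] T_def[symmetric] borel_lmeasurable(2)[OF SB bS] borel_lmeasurable(2)[OF TB bT]
      by (simp add: ennreal_mult)
  qed
  have "4 * emeasure lborel K = 2 * (\<integral>\<^sup>+a. 2 * f a \<partial>lborel)"
    unfolding emeasure_slices[OF KB] f_def by (simp add: nn_integral_cmult mult.assoc[symmetric])
  also have "(\<integral>\<^sup>+a. 2 * f a \<partial>lborel) = (\<integral>\<^sup>+r. indicator {0..} r * emeasure lborel {a. ennreal r < 2 * f a} \<partial>lborel)"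
    using f_fin by (intro layer_cake) (auto simp: ennreal_mult_less_top)
  also have "2 * \<dots> = (\<integral>\<^sup>+r. indicator {0..} r * (2 * emeasure lborel {a. ennreal r < 2 * f a}) \<partial>lborel)"
    by (subst nn_integral_cmult[symmetric]) (simp_all add: mult.left_commute)
  also have "\<dots> \<le> (\<integral>\<^sup>+r. indicator {0..} r * emeasure lborel {t. ennreal r < F t} \<partial>lborel)"
    by (intro nn_integral_mono) (auto simp: key split: split_indicator)
  also have "\<dots> = (\<integral>\<^sup>+t. F t \<partial>lborel)"
    using F_fin by (intro layer_cake[symmetric]) auto
  also have "\<dots> = emeasure lborel (dif K)"
    unfolding emeasure_slices[OF DB] F_def ..
  finally show ?thesis .
qed

lemma nn_integral_reflect:
  fixes h :: "real^2 \<Rightarrow> ennreal"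
  assumes [measurable]: "h \<in> borel_measurable borel"
  shows "(\<integral>\<^sup>+x. h (y - x) \<partial>lborel) = (\<integral>\<^sup>+x. h x \<partial>lborel)"
proof -
  have eq: "lborel = distr lborel borel (\<lambda>x::real^2. y + (-1) *\<^sub>R x)"
    using lborel_affine[of "-1" y] by (simp add: density_1)
  have "(\<integral>\<^sup>+x. h x \<partial>lborel) = (\<integral>\<^sup>+x. h x \<partial>distr lborel borel (\<lambda>x::real^2. y + (-1) *\<^sub>R x))"
    by (subst eq[symmetric]) simp
  also have "\<dots> = (\<integral>\<^sup>+x. h (y + (-1) *\<^sub>R x) \<partial>lborel)"
    by (subst nn_integral_distr) simp_all
  finally show ?thesis by simp
qed

lemma emeasure_affine_borel:
  fixes S :: "(real^2) set"
  assumes "compact S"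
  shows "emeasure lborel ((\<lambda>z. m *\<^sub>R z + d) ` S) = ennreal (m^2) * emeasure lborel S"
proof -
  have c: "compact ((\<lambda>z. m *\<^sub>R z + d) ` S)"
    by (intro compact_continuous_image assms continuous_intros)
  have "emeasure lborel ((\<lambda>z. m *\<^sub>R z + d) ` S) = emeasure lebesgue ((\<lambda>z. m *\<^sub>R z + d) ` S)"
    using c by (simp add: borel_compact)
  also have "\<dots> = \<bar>m\<bar> ^ 2 * emeasure lebesgue S"
    using emeasure_lebesgue_affine[of m d S] by simp
  also have "\<dots> = ennreal (m^2) * emeasure lborel S"
    using assms by (simp add: borel_compact power2_abs ennreal_power)
  finally show ?thesis .
qed

lemma conv_identity:
  fixes L :: "(real^2) set"
  assumes [measurable]: "L \<in> sets borel"
  shows "(\<integral>\<^sup>+x. (\<integral>\<^sup>+y. indicator L y * indicator L (y - x) \<partial>lborel) \<partial>lborel) = emeasure lborel L * emeasure lborel L"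
proof -
  have m: "(\<lambda>(x, y). indicator L y * indicator L (y - x) :: ennreal) \<in> borel_measurable (lborel \<Otimes>\<^sub>M lborel)"
  proof -
    have d: "(\<lambda>p::(real^2)\<times>(real^2). snd p - fst p) \<in> borel_measurable borel"
      by (intro borel_measurable_continuous_onI continuous_intros)
    have [measurable]: "(\<lambda>p::(real^2)\<times>(real^2). indicator L (snd p - fst p) :: ennreal) \<in> borel_measurable borel"
      by (rule measurable_compose[OF d]) simp
    have [measurable]: "(\<lambda>p::(real^2)\<times>(real^2). indicator L (snd p) :: ennreal) \<in> borel_measurable borel"
    proof -
      have s: "(\<lambda>p::(real^2)\<times>(real^2). snd p) \<in> borel_measurable borel"
        by (intro borel_measurable_continuous_onI continuous_intros)
      show ?thesis by (rule measurable_compose[OF s]) simp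
    qed
    have "(\<lambda>(x, y). indicator L y * indicator L (y - x) :: ennreal) = (\<lambda>p. indicator L (snd p) * indicator L (snd p - fst p))"
      by auto
    then show ?thesis unfolding lborel_prod by simp
  qed
  have "(\<integral>\<^sup>+x. (\<integral>\<^sup>+y. indicator L y * indicator L (y - x) \<partial>lborel) \<partial>lborel)
      = (\<integral>\<^sup>+y. (\<integral>\<^sup>+x. indicator L y * indicator L (y - x) \<partial>lborel) \<partial>lborel)"
    using lborel_pair.Fubini'[OF m] by simp
  also have "\<dots> = (\<integral>\<^sup>+y. indicator L y * emeasure lborel L \<partial>lborel)"
  proof (rule nn_integral_cong)
    fix y :: "real^2"
    have "(\<integral>\<^sup>+x. indicator L y * indicator L (y - x) \<partial>lborel) = indicator L y * (\<integral>\<^sup>+x. indicator L (y - x) \<partial>lborel)"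
      by (subst nn_integral_cmult) auto
    also have "(\<integral>\<^sup>+x. indicator L (y - x) \<partial>lborel) = (\<integral>\<^sup>+x. indicator L x \<partial>lborel)"
      by (rule nn_integral_reflect) simp
    finally show "(\<integral>\<^sup>+x. indicator L y * indicator L (y - x) \<partial>lborel) = indicator L y * emeasure lborel L"
      by simp
  qed
  also have "\<dots> = emeasure lborel L * emeasure lborel L"
    by (subst nn_integral_multc) auto
  finally show ?thesis .
qed

lemma conv_lower:
  fixes L :: "(real^2) set"
  assumes L: "compact L" "convex L" and p: "p \<in> L" and q: "q \<in> L" and t: "0 \<le> t" "t \<le> 1"
  shows "ennreal ((1 - t)^2) * emeasure lborel L \<le> (\<integral>\<^sup>+y. indicator L y * indicator L (y - t *\<^sub>R (p - q)) \<partial>lborel)"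
proof -
  define x where "x = t *\<^sub>R (p - q)"
  have LB[measurable]: "L \<in> sets borel" using L by (simp add: borel_compact)
  have eq: "(\<lambda>y. indicator L y * indicator L (y - x) :: ennreal) = indicator {y \<in> L. y - x \<in> L}"
    by (auto simp: fun_eq_iff split: split_indicator)
  have sb: "{y \<in> L. y - x \<in> L} \<in> sets borel" by measurable
  have sub: "(\<lambda>z. (1 - t) *\<^sub>R z + t *\<^sub>R p) ` L \<subseteq> {y \<in> L. y - x \<in> L}"
  proof
    fix y assume "y \<in> (\<lambda>z. (1 - t) *\<^sub>R z + t *\<^sub>R p) ` L"
    then obtain z where z: "z \<in> L" and y: "y = (1 - t) *\<^sub>R z + t *\<^sub>R p" by auto
    have "(1 - t) *\<^sub>R z + t *\<^sub>R p \<in> L" using L(2) z p t by (intro convexD) auto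
    then have yL: "y \<in> L" using y by simp
    have e: "(1 - t) *\<^sub>R z + t *\<^sub>R p - x = (1 - t) *\<^sub>R z + t *\<^sub>R q" by (simp add: x_def algebra_simps)
    have qL: "(1 - t) *\<^sub>R z + t *\<^sub>R q \<in> L" using L(2) z q t by (intro convexD) auto
    have "y - x \<in> L" unfolding y e by (rule qL)
    then show "y \<in> {y \<in> L. y - x \<in> L}" using yL by simp
  qed
  have "ennreal ((1 - t)^2) * emeasure lborel L = emeasure lborel ((\<lambda>z. (1 - t) *\<^sub>R z + t *\<^sub>R p) ` L)"
    by (rule emeasure_affine_borel[symmetric]) (rule L)
  also have "\<dots> \<le> emeasure lborel {y \<in> L. y - x \<in> L}"
    using sub sb by (intro emeasure_mono) auto
  also have "\<dots> = (\<integral>\<^sup>+y. indicator L y * indicator L (y - x) \<partial>lborel)"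
    unfolding eq using sb by simp
  finally show ?thesis unfolding x_def .
qed

definition kcone :: "(real^2) set \<Rightarrow> ((real^2) \<times> real) set" where
  "kcone L = (\<lambda>(z, t). (t *\<^sub>R z, t)) ` (dif L \<times> {0..1})"

lemma kcone_compact: "compact L \<Longrightarrow> compact (kcone L)"
  unfolding kcone_def
  by (intro compact_continuous_image compact_Times compact_dif)
     (auto simp: case_prod_unfold intro!: continuous_intros)

lemma kcone_mem: "(x, t) \<in> kcone L \<longleftrightarrow> 0 \<le> t \<and> t \<le> 1 \<and> x \<in> (\<lambda>z. t *\<^sub>R z + 0) ` dif L"
  unfolding kcone_def by force

lemma kcone_bound:
  fixes L :: "(real^2) set"
  assumes L: "compact L" "convex L" and A: "0 < emeasure lborel L"
  shows "emeasure lborel L * (\<integral>\<^sup>+t. ennreal (2 * (1 - t)) * indicator (kcone L) (x, t) \<partial>lborel)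
          \<le> (\<integral>\<^sup>+y. indicator L y * indicator L (y - x) \<partial>lborel)"
proof -
  define g where "g = (\<integral>\<^sup>+y. indicator L y * indicator L (y - x) \<partial>lborel)"
  have LB[measurable]: "L \<in> sets borel" using L by (simp add: borel_compact)
  have Afin: "emeasure lborel L < \<infinity>" using L by (intro emeasure_bounded_finite compact_imp_bounded)
  obtain a where a: "emeasure lborel L = ennreal a" "0 < a"
    using A Afin by (cases "emeasure lborel L" rule: ennreal_cases) auto
  have "g \<le> (\<integral>\<^sup>+y. indicator L y \<partial>lborel)"
    unfolding g_def by (intro nn_integral_mono) (auto split: split_indicator)
  then have gA: "g \<le> ennreal a" using a by simp
  then obtain c where c: "g = ennreal c" "0 \<le> c" "c \<le> a"
    using a(2) by (cases g rule: ennreal_cases) (auto simp: top_unique)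
  define \<rho> where "\<rho> = c / a"
  have \<rho>: "0 \<le> \<rho>" "\<rho> \<le> 1" using c a by (auto simp: \<rho>_def)
  define cc where "cc = 1 - sqrt \<rho>"
  have cc: "0 \<le> cc" "cc \<le> 1" using \<rho> by (auto simp: cc_def)
  have tcc: "cc \<le> t" if "(x, t) \<in> kcone L" for t
  proof -
    from that obtain z where t: "0 \<le> t" "t \<le> 1" and z: "z \<in> dif L" and xz: "x = t *\<^sub>R z"
      unfolding kcone_mem by auto
    from z obtain p q where pq: "p \<in> L" "q \<in> L" "z = p - q" unfolding dif_def by auto
    have "ennreal ((1 - t)^2) * emeasure lborel L \<le> g"
      unfolding g_def xz pq(3) by (rule conv_lower[OF L pq(1,2) t])
    then have "ennreal ((1 - t)^2 * a) \<le> ennreal c" using a c by (simp add: ennreal_mult)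
    then have "(1 - t)^2 * a \<le> c" using c by (simp add: ennreal_le_iff)
    then have "(1 - t)^2 \<le> \<rho>" using a by (simp add: \<rho>_def field_simps)
    then have "1 - t \<le> sqrt \<rho>" using t by (simp add: real_le_rsqrt)
    then show ?thesis by (simp add: cc_def)
  qed
  have "(\<integral>\<^sup>+t. ennreal (2 * (1 - t)) * indicator (kcone L) (x, t) \<partial>lborel)
        \<le> (\<integral>\<^sup>+t. ennreal (2 * (1 - t)) * indicator {cc..1} t \<partial>lborel)"
  proof (intro nn_integral_mono)
    fix t
    show "ennreal (2 * (1 - t)) * indicator (kcone L) (x, t) \<le> ennreal (2 * (1 - t)) * indicator {cc..1} t"
      using tcc[of t] by (auto simp: kcone_mem split: split_indicator)
  qed
  also have "\<dots> = ennreal ((2 * 1 - 1^2) - (2 * cc - cc^2))"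
    using cc by (intro nn_integral_FTC_Icc) (auto intro!: derivative_eq_intros)
  also have "(2 * 1 - 1^2) - (2 * cc - cc^2) = \<rho>"
    using \<rho> by (simp add: cc_def power2_eq_square algebra_simps)
  finally have I: "(\<integral>\<^sup>+t. ennreal (2 * (1 - t)) * indicator (kcone L) (x, t) \<partial>lborel) \<le> ennreal \<rho>" .
  have "emeasure lborel L * (\<integral>\<^sup>+t. ennreal (2 * (1 - t)) * indicator (kcone L) (x, t) \<partial>lborel) \<le> ennreal a * ennreal \<rho>"
    using I a by (auto intro: mult_left_mono)
  also have "\<dots> = g" using a c \<rho> by (simp add: ennreal_mult[symmetric] \<rho>_def)
  finally show ?thesis unfolding g_def .
qed

theorem RS:
  fixes L :: "(real^2) set"
  assumes L: "compact L" "convex L" and A: "0 < emeasure lborel L"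
  shows "emeasure lborel (dif L) \<le> 6 * emeasure lborel L"
proof -
  define E where "E = emeasure lborel (dif L)"
  define h where "h = (\<lambda>(x::real^2, t::real). ennreal (2 * (1 - t)) * indicator (kcone L) (x, t))"
  have LB[measurable]: "L \<in> sets borel" using L by (simp add: borel_compact)
  have CB[measurable]: "kcone L \<in> sets borel" using kcone_compact[OF L(1)] by (simp add: borel_compact)
  have DB: "dif L \<in> sets borel" using compact_dif[OF L(1)] by (simp add: borel_compact)
  have hm: "h \<in> borel_measurable (lborel \<Otimes>\<^sub>M lborel)"
  proof -
    have s: "(\<lambda>p::(real^2)\<times>real. snd p) \<in> borel_measurable borel"
      by (intro borel_measurable_continuous_onI continuous_intros)
    have "(\<lambda>p::(real^2)\<times>real. ennreal (2 * (1 - snd p)) * indicator (kcone L) p) \<in> borel_measurable borel"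
      using s by measurable
    moreover have "h = (\<lambda>p. ennreal (2 * (1 - snd p)) * indicator (kcone L) p)"
      by (auto simp: h_def)
    ultimately show ?thesis unfolding lborel_prod by simp
  qed
  have Afin: "emeasure lborel L < \<infinity>" using L by (intro emeasure_bounded_finite compact_imp_bounded)
  have Efin: "E < \<infinity>" unfolding E_def using compact_dif[OF L(1)] by (intro emeasure_bounded_finite compact_imp_bounded)
  have inner: "(\<integral>\<^sup>+x. h (x, t) \<partial>lborel) = E * (ennreal (2 * (1 - t) * t^2) * indicator {0..1} t)" for t
  proof (cases "0 \<le> t \<and> t \<le> 1")
    case True
    have eq: "{x. (x, t) \<in> kcone L} = (\<lambda>z. t *\<^sub>R z + 0) ` dif L" using True by (auto simp: kcone_mem)
    have "(\<integral>\<^sup>+x. h (x, t) \<partial>lborel) = ennreal (2 * (1 - t)) * (\<integral>\<^sup>+x. indicator {x. (x, t) \<in> kcone L} x \<partial>lborel)"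
      unfolding h_def by (subst nn_integral_cmult[symmetric]) (auto intro!: nn_integral_cong split: split_indicator)
    also have "(\<integral>\<^sup>+x. indicator {x. (x, t) \<in> kcone L} x \<partial>lborel) = emeasure lborel ((\<lambda>z. t *\<^sub>R z + 0) ` dif L)"
    proof -
      have cp: "compact ((\<lambda>z. t *\<^sub>R z + 0) ` dif L)"
        by (intro compact_continuous_image compact_dif L continuous_intros)
      show ?thesis unfolding eq using borel_compact[OF cp] by (subst nn_integral_indicator) auto
    qed
    also have "\<dots> = ennreal (t^2) * E"
      unfolding E_def by (rule emeasure_affine_borel) (rule compact_dif[OF L(1)])
    finally show ?thesis using True
      by (simp add: ennreal_mult[symmetric] mult_ac)
  next
    case False
    then have "\<And>x. h (x, t) = 0" by (auto simp: h_def kcone_mem)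
    then show ?thesis using False by simp
  qed
  have "emeasure lborel L * emeasure lborel L = (\<integral>\<^sup>+x. (\<integral>\<^sup>+y. indicator L y * indicator L (y - x) \<partial>lborel) \<partial>lborel)"
    by (rule conv_identity[symmetric]) simp
  also have "\<dots> \<ge> (\<integral>\<^sup>+x. emeasure lborel L * (\<integral>\<^sup>+t. h (x, t) \<partial>lborel) \<partial>lborel)"
    by (intro nn_integral_mono) (simp only: h_def case_prod_conv kcone_bound[OF L A])
  finally have "emeasure lborel L * (\<integral>\<^sup>+x. (\<integral>\<^sup>+t. h (x, t) \<partial>lborel) \<partial>lborel) \<le> emeasure lborel L * emeasure lborel L"
    using hm by (subst nn_integral_cmult[symmetric]) (auto intro!: lborel.borel_measurable_nn_integral_fst)
  also have "(\<integral>\<^sup>+x. (\<integral>\<^sup>+t. h (x, t) \<partial>lborel) \<partial>lborel) = (\<integral>\<^sup>+t. (\<integral>\<^sup>+x. h (x, t) \<partial>lborel) \<partial>lborel)"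
    using lborel_pair.Fubini'[of "\<lambda>x t. h (x, t)"] hm by (simp add: case_prod_unfold)
  also have "\<dots> = E * (\<integral>\<^sup>+t. ennreal (2 * (1 - t) * t^2) * indicator {0..1} t \<partial>lborel)"
    unfolding inner by (subst nn_integral_cmult) auto
  also have "(\<integral>\<^sup>+t. ennreal (2 * (1 - t) * t^2) * indicator {0..1} t \<partial>lborel)
      = ennreal ((2/3 * 1^3 - 1/2 * 1^4) - (2/3 * 0^3 - 1/2 * 0^4))"
  proof (intro nn_integral_FTC_Icc)
    fix t :: real assume t: "t \<in> {0..1}"
    have "0 \<le> 1 - t" "0 \<le> t^2" using t by auto
    then show "0 \<le> 2 * (1 - t) * t^2" by simp
  qed (auto intro!: derivative_eq_intros simp: power2_eq_square power3_eq_cube algebra_simps)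
  finally have ineq: "emeasure lborel L * (E * ennreal (1/6)) \<le> emeasure lborel L * emeasure lborel L"
    by simp
  obtain a where a: "emeasure lborel L = ennreal a" "0 < a"
    using A Afin by (cases "emeasure lborel L" rule: ennreal_cases) auto
  obtain e where e: "E = ennreal e" "0 \<le> e"
    using Efin by (cases E rule: ennreal_cases) auto
  have "ennreal (a * (e * (1/6))) \<le> ennreal (a * a)"
    using ineq a e by (simp add: ennreal_mult[symmetric])
  then have "a * (e * (1/6)) \<le> a * a" using a by (simp add: ennreal_le_iff)
  then have "e \<le> 6 * a" using a by (simp add: field_simps)
  then have "ennreal e \<le> ennreal (6 * a)" by (rule ennreal_leI)
  then show ?thesis unfolding E_def[symmetric] using a e by (simp add: ennreal_mult)
qed

lemma inner2: "(x::real^2) \<bullet> y = x$1 * y$1 + x$2 * y$2"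
  by (simp add: inner_vec_def UNIV_2')

lemma exists_perp_unit: "\<exists>u::real^2. norm u = 1 \<and> u \<bullet> v = 0"
proof (cases "v = 0")
  case True
  then show ?thesis by (intro exI[of _ "axis 1 1"]) (simp add: norm_eq_sqrt_inner inner2 axis_def)
next
  case False
  define r :: "real^2" where "r = vector [- v$2, v$1]"
  have rv: "r \<bullet> v = 0" by (simp add: r_def inner2)
  have "norm r = norm v" unfolding norm_eq_sqrt_inner by (simp add: r_def inner2 algebra_simps)
  then have nr: "norm r \<noteq> 0" using False by simp
  show ?thesis
    using nr rv by (intro exI[of _ "sgn r"]) (auto simp: norm_sgn sgn_div_norm)
qed

lemma width_eq:
  assumes hyp: "proj_hyp K L" and x: "x \<in> K" and y: "y \<in> K"
  shows "\<exists>p\<in>L. \<exists>q\<in>L. v \<bullet> (x - y) = v \<bullet> (p - q)"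
proof -
  obtain u :: "real^2" where u: "norm u = 1" "u \<bullet> v = 0" using exists_perp_unit by blast
  define P where "P z = z - (z \<bullet> u) *\<^sub>R u" for z
  have vP: "v \<bullet> P z = v \<bullet> z" for z using u(2) by (simp add: P_def inner_diff_right inner_commute)
  obtain w where w: "(\<lambda>z. z + w) ` proj_perp u K \<subseteq> proj_perp u L"
    using hyp u(1) unfolding proj_hyp_def contains_translate_def by blast
  have "P x + w \<in> P ` L" using w x unfolding proj_perp_def P_def by blast
  then obtain p where p: "p \<in> L" "P x + w = P p" by auto
  have "P y + w \<in> P ` L" using w y unfolding proj_perp_def P_def by blast
  then obtain q where q: "q \<in> L" "P y + w = P q" by auto
  have "v \<bullet> (P x + w) = v \<bullet> P p" using p by simp
  moreover have "v \<bullet> (P y + w) = v \<bullet> P q" using q by simp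
  ultimately have "v \<bullet> (x - y) = v \<bullet> (p - q)"
    by (simp add: vP inner_add_right inner_diff_right)
  then show ?thesis using p q by blast
qed

lemma dif_sub:
  assumes hyp: "proj_hyp K L" and L: "compact L" "convex L"
  shows "dif K \<subseteq> dif L"
proof
  fix d assume "d \<in> dif K"
  then obtain x y where xy: "x \<in> K" "y \<in> K" "d = x - y" unfolding dif_def by auto
  show "d \<in> dif L"
  proof (rule ccontr)
    assume nd: "d \<notin> dif L"
    have "{x - y |x y. x \<in> L \<and> y \<in> L} = (\<Union>x\<in>L. \<Union>y\<in>L. {x - y})" by blast
    then have "convex (dif L)" unfolding dif_def using convex_differences[OF L(2) L(2)] by simp
    moreover have "closed (dif L)" using compact_dif[OF L(1)] compact_imp_closed by blast
    ultimately obtain a b where ab: "a \<bullet> d < b" "\<forall>z\<in>dif L. b < a \<bullet> z"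
      using separating_hyperplane_closed_point[OF _ _ nd] by blast
    obtain p q where pq: "p \<in> L" "q \<in> L" "a \<bullet> (x - y) = a \<bullet> (p - q)"
      using width_eq[OF hyp xy(1,2)] by blast
    have "p - q \<in> dif L" using pq unfolding dif_def by blast
    then show False using ab pq xy by force
  qed
qed

theorem part1:
  fixes K L :: "(real^2) set"
  assumes K: "compact K" "convex K" and L: "compact L" "convex L" and hyp: "proj_hyp K L"
  shows "measure lebesgue K \<le> 3/2 * measure lebesgue L"
proof -
  have KB: "K \<in> sets borel" using K by (simp add: borel_compact)
  have LB: "L \<in> sets borel" using L by (simp add: borel_compact)
  have eK: "emeasure lborel K = ennreal (measure lebesgue K)"
    using borel_lmeasurable(2)[OF KB] K compact_imp_bounded by blast
  have eL: "emeasure lborel L = ennreal (measure lebesgue L)"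
    using borel_lmeasurable(2)[OF LB] L compact_imp_bounded by blast
  show ?thesis
  proof (cases "0 < emeasure lborel L")
    case True
    have "4 * emeasure lborel K \<le> emeasure lborel (dif K)" by (rule BM[OF K])
    also have "\<dots> \<le> emeasure lborel (dif L)"
      using dif_sub[OF hyp L] compact_dif[OF L(1)] by (intro emeasure_mono) (auto simp: borel_compact)
    also have "\<dots> \<le> 6 * emeasure lborel L" by (rule RS[OF L True])
    finally have "ennreal (4 * measure lebesgue K) \<le> ennreal (6 * measure lebesgue L)"
      unfolding eK eL by (simp add: ennreal_mult)
    then have "4 * measure lebesgue K \<le> 6 * measure lebesgue L"
      by (simp add: ennreal_le_iff)
    then show ?thesis by simp
  next
    case False
    then have L0: "emeasure lborel L = 0" by (simp add: not_less)
    show ?thesis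
    proof (cases "K = {}")
      case True then show ?thesis by simp
    next
      case False
      then obtain k0 where k0: "k0 \<in> K" by auto
      obtain p0 where p0: "p0 \<in> L" using width_eq[OF hyp k0 k0] by blast
      have "L \<in> null_sets lborel" using L0 LB by (simp add: null_sets_def)
      then have "negligible L" by (simp add: negligible_iff_null_sets null_sets_completionI)
      then have iL: "interior L = {}" using negligible_convex_interior[OF L(2)] by simp
      have "aff_dim L \<noteq> int DIM(real^2)"
      proof
        assume "aff_dim L = int DIM(real^2)"
        then have "rel_interior L = {}" using iL interior_rel_interior_gen[of L] by simp
        then show False using rel_interior_eq_empty[OF L(2)] p0 by auto
      qed
      then have "aff_dim L < int DIM(real^2)" using aff_dim_le_DIM[of L] by linarith
      then obtain a b where ab: "a \<noteq> 0" "L \<subseteq> {x. a \<bullet> x = b}"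
        by (rule aff_lowdim_subset_hyperplane)
      have "K \<subseteq> {x. a \<bullet> x = a \<bullet> k0}"
      proof
        fix x assume x: "x \<in> K"
        have "x - k0 \<in> dif L" using dif_sub[OF hyp L] x k0 unfolding dif_def by blast
        then obtain p q where "p \<in> L" "q \<in> L" "x - k0 = p - q" unfolding dif_def by auto
        then have "a \<bullet> (x - k0) = 0" using ab by (auto simp: inner_diff_right)
        then show "x \<in> {x. a \<bullet> x = a \<bullet> k0}" by (simp add: inner_diff_right)
      qed
      then have "negligible K" using negligible_hyperplane[of a "a \<bullet> k0"] ab(1) negligible_subset by blast
      then have "measure lebesgue K = 0" by (rule negligible_imp_measure0)
      then show ?thesis by simp
    qed
  qed
qed

lemma half_dif_hyp:
  fixes L :: "(real^2) set"
  assumes L: "compact L" "convex L" "L \<noteq> {}"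
  shows "proj_hyp ((\<lambda>z. (1/2::real) *\<^sub>R z) ` dif L) L"
  unfolding proj_hyp_def contains_translate_def
proof (intro allI impI)
  fix u :: "real^2" assume u: "norm u = 1"
  have uu: "u$1 * u$1 + u$2 * u$2 = 1" using u unfolding norm_eq_sqrt_inner by (simp add: inner2)
  define v :: "real^2" where "v = vector [- u$2, u$1]"
  have Pv: "z - (z \<bullet> u) *\<^sub>R u = (z \<bullet> v) *\<^sub>R v" for z
  proof -
    have "z$1 - (z$1 * u$1 + z$2 * u$2) * u$1 = (- z$1 * u$2 + z$2 * u$1) * (- u$2)"
      using uu by algebra
    moreover have "z$2 - (z$1 * u$1 + z$2 * u$2) * u$2 = (- z$1 * u$2 + z$2 * u$1) * u$1"
      using uu by algebra
    ultimately show ?thesis by (simp add: vec_eq_iff forall_2 inner2 v_def)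
  qed
  define S where "S = (\<lambda>z. z \<bullet> v) ` L"
  have cS: "compact S" unfolding S_def by (intro compact_continuous_image L continuous_intros)
  have neS: "S \<noteq> {}" using L unfolding S_def by auto
  have cvS: "convex S" unfolding S_def by (intro convex_linear_image L(2)) (simp add: bounded_linear_inner_left bounded_linear.linear)
  define m where "m = Inf S"
  define M where "M = Sup S"
  have mS: "m \<in> S" unfolding m_def using cS neS by (simp add: compact_attains_inf closed_contains_Inf compact_imp_closed bounded_imp_bdd_below compact_imp_bounded)
  have MS: "M \<in> S" unfolding M_def using cS neS by (simp add: closed_contains_Sup compact_imp_closed bounded_imp_bdd_above compact_imp_bounded)
  have bnd: "m \<le> s \<and> s \<le> M" if "s \<in> S" for s
    using that cS unfolding m_def M_def
    by (meson bounded_imp_bdd_above bounded_imp_bdd_below cInf_lower cSup_upper compact_imp_bounded)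
  have interv: "s \<in> S" if "m \<le> s" "s \<le> M" for s
  proof -
    have "is_interval S" using cvS by (simp add: is_interval_convex_1)
    then show ?thesis using mS MS that unfolding is_interval_1 by blast
  qed
  show "\<exists>w. (\<lambda>x. x + w) ` proj_perp u ((\<lambda>z. (1/2::real) *\<^sub>R z) ` dif L) \<subseteq> proj_perp u L"
  proof (intro exI[of _ "((m + M) / 2) *\<^sub>R v"] subsetI)
    fix k assume "k \<in> (\<lambda>x. x + ((m + M) / 2) *\<^sub>R v) ` proj_perp u ((\<lambda>z. (1/2::real) *\<^sub>R z) ` dif L)"
    then obtain x y where xy: "x \<in> L" "y \<in> L"
      and k: "k = ((1/2) *\<^sub>R (x - y)) - (((1/2) *\<^sub>R (x - y)) \<bullet> u) *\<^sub>R u + ((m + M) / 2) *\<^sub>R v"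
      unfolding proj_perp_def dif_def by auto
    define \<tau> where "\<tau> = (x \<bullet> v - y \<bullet> v) / 2 + (m + M) / 2"
    have "x \<bullet> v \<in> S" "y \<bullet> v \<in> S" using xy unfolding S_def by auto
    then have "m \<le> \<tau>" "\<tau> \<le> M" using bnd[of "x \<bullet> v"] bnd[of "y \<bullet> v"] unfolding \<tau>_def by (auto simp: field_simps)
    then have "\<tau> \<in> S" by (rule interv)
    then obtain z where z: "z \<in> L" "\<tau> = z \<bullet> v" unfolding S_def by auto
    have "k = (((1/2) *\<^sub>R (x - y)) \<bullet> v) *\<^sub>R v + ((m + M) / 2) *\<^sub>R v"
      unfolding k Pv ..
    also have "\<dots> = \<tau> *\<^sub>R v"
      unfolding \<tau>_def by (subst scaleR_add_left[symmetric]) (simp add: inner_diff_left)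
    also have "\<dots> = z - (z \<bullet> u) *\<^sub>R u" using z by (simp add: Pv)
    finally show "k \<in> proj_perp u L" unfolding proj_perp_def using z by blast
  qed
qed

lemma hex_measure:
  "3 \<le> measure lborel {x::real^2. \<bar>x$1\<bar> \<le> 1 \<and> \<bar>x$2\<bar> \<le> 1 \<and> \<bar>x$1 + x$2\<bar> \<le> 1}"
proof -
  define H where "H = {x::real^2. \<bar>x$1\<bar> \<le> 1 \<and> \<bar>x$2\<bar> \<le> 1 \<and> \<bar>x$1 + x$2\<bar> \<le> 1}"
  define Q :: "(real^2) set" where "Q = cbox (vector [-1, -1]) (vector [1, 1])"
  define T1 :: "(real^2) set" where "T1 = convex hull {vector [1, 0], vector [0, 1], vector [1, 1]}"
  define T2 :: "(real^2) set" where "T2 = convex hull {vector [-1, 0], vector [0, -1], vector [-1, -1]}"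
  have HB: "H \<in> sets borel"
  proof -
    have "closed H" unfolding H_def
      by (intro closed_Collect_conj closed_Collect_le continuous_intros)
    then show ?thesis by simp
  qed
  have T1B: "T1 \<in> sets borel" unfolding T1_def
    by (intro borel_closed compact_imp_closed finite_imp_compact_convex_hull) auto
  have T2B: "T2 \<in> sets borel" unfolding T2_def
    by (intro borel_closed compact_imp_closed finite_imp_compact_convex_hull) auto
  have mQ: "measure lborel Q = 4"
  proof -
    have "(0::real^2) \<in> Q" unfolding Q_def by (simp add: mem_box_cart forall_2)
    then have "Q \<noteq> {}" by auto
    then show ?thesis unfolding Q_def by (simp add: content_cbox_cart UNIV_2')
  qed
  have mT1: "measure lborel T1 = 1/2" unfolding T1_def by (simp add: content_triangle)
  have mT2: "measure lborel T2 = 1/2" unfolding T2_def by (simp add: content_triangle)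
  have sub: "Q \<subseteq> H \<union> T1 \<union> T2"
  proof
    fix z assume "z \<in> Q"
    then have z: "\<bar>z$1\<bar> \<le> 1" "\<bar>z$2\<bar> \<le> 1" unfolding Q_def by (auto simp: mem_box_cart forall_2)
    consider "\<bar>z$1 + z$2\<bar> \<le> 1" | "z$1 + z$2 > 1" | "z$1 + z$2 < -1" by linarith
    then show "z \<in> H \<union> T1 \<union> T2"
    proof cases
      case 1 then show ?thesis using z unfolding H_def by auto
    next
      case 2
      have "z = (1 - z$2) *\<^sub>R vector [1, 0] + (1 - z$1) *\<^sub>R vector [0, 1] + (z$1 + z$2 - 1) *\<^sub>R (vector [1, 1] :: real^2)"
        by (simp add: vec_eq_iff forall_2)
      moreover have "0 \<le> 1 - z$2" "0 \<le> 1 - z$1" "0 \<le> z$1 + z$2 - 1" using z 2 by auto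
      ultimately have "z \<in> T1" unfolding T1_def convex_hull_3 by (intro CollectI exI) auto
      then show ?thesis by simp
    next
      case 3
      have "z = (1 + z$2) *\<^sub>R vector [-1, 0] + (1 + z$1) *\<^sub>R vector [0, -1] + (- z$1 - z$2 - 1) *\<^sub>R (vector [-1, -1] :: real^2)"
        by (simp add: vec_eq_iff forall_2)
      moreover have "0 \<le> 1 + z$2" "0 \<le> 1 + z$1" "0 \<le> - z$1 - z$2 - 1" using z 3 by auto
      ultimately have "z \<in> T2" unfolding T2_def convex_hull_3 by (intro CollectI exI) auto
      then show ?thesis by simp
    qed
  qed
  have bH: "bounded H"
  proof -
    have "norm x \<le> 2" if "x \<in> H" for x
      using that norm_le_l1_cart[of x] by (simp add: H_def UNIV_2')
    then show ?thesis unfolding bounded_iff by blast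
  qed
  have bT1: "bounded T1" unfolding T1_def by (intro compact_imp_bounded finite_imp_compact_convex_hull) auto
  have bT2: "bounded T2" unfolding T2_def by (intro compact_imp_bounded finite_imp_compact_convex_hull) auto
  have "4 \<le> measure lborel (H \<union> T1 \<union> T2)"
    unfolding mQ[symmetric]
    using sub HB T1B T2B bH bT1 bT2
    by (intro measure_mono_fmeasurable) (auto simp: Q_def intro!: fmeasurableI emeasure_bounded_finite)
  also have "\<dots> \<le> measure lborel (H \<union> T1) + measure lborel T2"
    using HB T1B T2B by (intro measure_Un_le) auto
  also have "\<dots> \<le> measure lborel H + measure lborel T1 + measure lborel T2"
    using HB T1B by (simp add: measure_Un_le)
  finally show ?thesis unfolding H_def[symmetric] using mT1 mT2 by simp
qed

lemma tri_dif_measure: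
  fixes a b c :: "real^2"
  defines "L \<equiv> convex hull {a, b, c}"
  shows "6 * measure lebesgue L \<le> measure lebesgue (dif L)"
proof -
  define g where "g x = x$1 *\<^sub>R (b - a) + x$2 *\<^sub>R (c - a)" for x :: "real^2"
  define H where "H = {x::real^2. \<bar>x$1\<bar> \<le> 1 \<and> \<bar>x$2\<bar> \<le> 1 \<and> \<bar>x$1 + x$2\<bar> \<le> 1}"
  have lin: "linear g" unfolding g_def by (auto simp: linear_iff algebra_simps)
  have Tp: "a + p1 *\<^sub>R (b - a) + p2 *\<^sub>R (c - a) \<in> L" if "0 \<le> p1" "0 \<le> p2" "p1 + p2 \<le> 1" for p1 p2
  proof -
    have "a + p1 *\<^sub>R (b - a) + p2 *\<^sub>R (c - a) = (1 - p1 - p2) *\<^sub>R a + p1 *\<^sub>R b + p2 *\<^sub>R c"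
      by (simp add: algebra_simps)
    then show ?thesis unfolding L_def convex_hull_3 using that by (intro CollectI exI[of _ "1 - p1 - p2"] exI) auto
  qed
  have gd: "g x \<in> dif L" if "0 \<le> p1" "0 \<le> p2" "p1 + p2 \<le> 1" "0 \<le> q1" "0 \<le> q2" "q1 + q2 \<le> 1"
    "x$1 = p1 - q1" "x$2 = p2 - q2" for x p1 p2 q1 q2
  proof -
    have "g x = (a + p1 *\<^sub>R (b - a) + p2 *\<^sub>R (c - a)) - (a + q1 *\<^sub>R (b - a) + q2 *\<^sub>R (c - a))"
      unfolding g_def that(7) that(8) by (simp add: algebra_simps)
    then show ?thesis unfolding dif_def using Tp that by blast
  qed
  have gH: "g ` H \<subseteq> dif L"
  proof
    fix y assume "y \<in> g ` H"
    then obtain x where x: "x \<in> H" "y = g x" by auto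
    have h: "\<bar>x$1\<bar> \<le> 1" "\<bar>x$2\<bar> \<le> 1" "\<bar>x$1 + x$2\<bar> \<le> 1" using x(1) by (auto simp: H_def)
    consider "0 \<le> x$1" "0 \<le> x$2" | "x$1 \<le> 0" "x$2 \<le> 0" | "0 \<le> x$1" "x$2 \<le> 0" | "x$1 \<le> 0" "0 \<le> x$2"
      by linarith
    then show "y \<in> dif L"
    proof cases
      case 1 then show ?thesis unfolding x(2) using h by (intro gd[of "x$1" "x$2" 0 0]) auto
    next
      case 2 then show ?thesis unfolding x(2) using h by (intro gd[of 0 0 "- x$1" "- x$2"]) auto
    next
      case 3 then show ?thesis unfolding x(2) using h by (intro gd[of "x$1" 0 0 "- x$2"]) auto
    next
      case 4 then show ?thesis unfolding x(2) using h by (intro gd[of 0 "x$2" "- x$1" 0]) auto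
    qed
  qed
  have cL: "compact L" unfolding L_def by (intro finite_imp_compact_convex_hull) auto
  have cD: "compact (dif L)" by (rule compact_dif[OF cL])
  have HB: "closed H" unfolding H_def
    by (intro closed_Collect_conj closed_Collect_le continuous_intros)
  have bH: "bounded H"
  proof -
    have "norm x \<le> 2" if "x \<in> H" for x
      using that norm_le_l1_cart[of x] by (simp add: H_def UNIV_2')
    then show ?thesis unfolding bounded_iff by blast
  qed
  have det: "det (matrix g) = (b - a)$1 * (c - a)$2 - (c - a)$1 * (b - a)$2"
    by (simp add: det_2 matrix_def g_def axis_def)
  have "measure lebesgue (g ` H) = \<bar>det (matrix g)\<bar> * measure lebesgue H"
    using bH HB lin by (intro measure_lebesgue_linear_transformation) auto
  also have "measure lebesgue H = measure lborel H" using HB by simp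
  finally have eq1: "measure lebesgue (g ` H) = \<bar>det (matrix g)\<bar> * measure lborel H" .
  have h3: "3 \<le> measure lborel H" using hex_measure unfolding H_def .
  have mgH: "3 * \<bar>det (matrix g)\<bar> \<le> measure lebesgue (g ` H)"
    unfolding eq1 using mult_right_mono[OF h3 abs_ge_zero[of "det (matrix g)"]] by (simp add: mult.commute)
  have gHc: "compact (g ` H)"
    using bH HB lin by (intro compact_continuous_image linear_continuous_on) (auto simp: compact_eq_bounded_closed linear_linear)
  have "measure lebesgue (g ` H) \<le> measure lebesgue (dif L)"
    using gH cD gHc by (intro measure_mono_fmeasurable) (auto intro: lmeasurable_compact fmeasurableD)
  moreover have "measure lebesgue L = \<bar>det (matrix g)\<bar> / 2"
    using cL unfolding det L_def by (simp add: borel_compact content_triangle abs_minus_commute algebra_simps)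
  ultimately show ?thesis using mgH by simp
qed

theorem mainTheorem12:
  shows "(\<forall>K L :: (real^2) set.
            compact K \<and> convex K \<and> compact L \<and> convex L \<and> proj_hyp K L \<longrightarrow>
            measure lebesgue K \<le> 3/2 * measure lebesgue L)
       \<and> (\<forall>a b c :: real^2. \<not> collinear {a, b, c} \<longrightarrow>
            (let L = convex hull {a, b, c};
                 K = (\<lambda>z. (1/2::real) *\<^sub>R z) ` {x - y | x y. x \<in> L \<and> y \<in> L}
             in proj_hyp K L \<and> measure lebesgue K = 3/2 * measure lebesgue L))"
proof (intro conjI allI impI)
  fix K L :: "(real^2) set"
  assume "compact K \<and> convex K \<and> compact L \<and> convex L \<and> proj_hyp K L"
  then show "measure lebesgue K \<le> 3/2 * measure lebesgue L" using part1 by blast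
next
  fix a b c :: "real^2"
  define L where "L = convex hull {a, b, c}"
  define K where "K = (\<lambda>z. (1/2::real) *\<^sub>R z) ` dif L"
  have cL: "compact L" unfolding L_def by (intro finite_imp_compact_convex_hull) auto
  have cvL: "convex L" unfolding L_def by simp
  have neL: "L \<noteq> {}" unfolding L_def by simp
  have hyp: "proj_hyp K L" unfolding K_def by (rule half_dif_hyp[OF cL cvL neL])
  have cK: "compact K" unfolding K_def by (intro compact_continuous_image compact_dif cL continuous_intros)
  have cvD: "convex (dif L)"
  proof -
    have "dif L = (\<Union>x\<in>L. \<Union>y\<in>L. {x - y})" unfolding dif_def by blast
    then show ?thesis using convex_differences[OF cvL cvL] by simp
  qed
  have cvK: "convex K" unfolding K_def by (intro convex_linear_image cvD) (simp add: linear_scaleR)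
  have le: "measure lebesgue K \<le> 3/2 * measure lebesgue L" using part1[OF cK cvK cL cvL hyp] .
  have "measure lebesgue K = (1/2)^2 * measure lebesgue (dif L)"
    using measure_lebesgue_affine[of "1/2::real" 0 "dif L"] unfolding K_def by simp
  then have ge: "3/2 * measure lebesgue L \<le> measure lebesgue K"
    using tri_dif_measure[of a b c] unfolding L_def[symmetric] by (simp add: power2_eq_square)
  show "let L = convex hull {a, b, c};
                 K = (\<lambda>z. (1/2::real) *\<^sub>R z) ` {x - y | x y. x \<in> L \<and> y \<in> L}
             in proj_hyp K L \<and> measure lebesgue K = 3/2 * measure lebesgue L"
    unfolding Let_def L_def[symmetric] dif_def[symmetric] K_def[symmetric]
    using hyp le ge by simp
qed

end
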